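(* Let $h>0$, $P\ge 0$, $0<\zeta\le 1$, $\sigma_A^2\ge 0$, $\sigma_{\rm cov}^2>0$, $P_S>0$, let $N\ge1$ be an integer, and let $\mathcal{A}_N=\{0,1/N,2/N,\dots,1\}$. With $f(\rho)=\log_2\!\left(1+\frac{(1-\rho)hP}{(1-\rho)\sigma_A^2+\sigma_{\rm cov}^2}\right)$ for $\rho\in[0,1]$, define the DPS region with circuit power $$\mathcal{C}^{\rm DPS'}(P)=\bigcup_{\alpha\in\mathcal{A}_N}\ \bigcup_{\boldsymbol\rho\in[0,1]^N}\Big\{(R,Q):\ 0\le Q\le \tfrac1N\Big(\sum_{k=1}^N\rho_k\zeta hP-\sum_{k=\alpha N+1}^{N}P_S\Big),\ \ R\le \tfrac1N\sum_{k=\alpha N+1}^N f(\rho_k)\Big\}$$ and the on-off power splitting (OPS) region with circuit power $$\mathcal{C}^{\rm OPS'}(P)=\bigcup_{\alpha\in\mathcal{A}_N}\ \bigcup_{\rho\in[0,1]}\Big\{(R,Q):\ 0\le Q\le \alpha\zeta hP+(1-\alpha)\rho\zeta hP-(1-\alpha)P_S,\ \ R\le (1-\alpha)f(\rho)\Big\}.$$ Then $\mathcal{C}^{\rm DPS'}(P)=\mathcal{C}^{\rm OPS'}(P)$ for every $P\ge0$.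
   Context: Model of a separated receiver with information-decoding circuit power $P_S$: in a block of $N$ symbols, the information decoder is switched off for the first $\alpha N$ symbols and on (consuming power $P_S$ per symbol) for the remaining $(1-\alpha)N$ symbols; in symbol $k$ a fraction $\rho_k$ of the received power $hP$ is harvested with efficiency $\zeta$ and the fraction $1-\rho_k$ is used for decoding with rate $f(\rho_k)$ when the decoder is on. $\sigma_A^2$ is antenna noise power, $\sigma_{\rm cov}^2$ is conversion noise power. OPS is the special case $\rho_k=1$ for $k\le\alpha N$ and $\rho_k=\rho$ for $k>\alpha N$. *)

theory Defs
  imports Complex_Main
begin

text \<open>Rate function f(rho) = log2(1 + (1-rho) h P / ((1-rho) sigma_A^2 + sigma_cov^2)).
  Here sA stands for sigma_A^2 and scov for sigma_cov^2.\<close>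
definition rate_f :: "real \<Rightarrow> real \<Rightarrow> real \<Rightarrow> real \<Rightarrow> real \<Rightarrow> real" where
  "rate_f h P sA scov \<rho> = log 2 (1 + (1 - \<rho>) * h * P / ((1 - \<rho>) * sA + scov))"

text \<open>alpha ranges over A_N = {j/N | j = 0..N}; we index by j, so alpha*N = j.
  Splitting vectors rho in [0,1]^N are functions on {1..N}.\<close>
definition C_DPS :: "nat \<Rightarrow> real \<Rightarrow> real \<Rightarrow> real \<Rightarrow> real \<Rightarrow> real \<Rightarrow> real \<Rightarrow> (real \<times> real) set" where
  "C_DPS N h P \<zeta> sA scov PS =
     (\<Union>j\<in>{0..N}. \<Union>\<rho>\<in>{\<rho> :: nat \<Rightarrow> real. \<forall>k\<in>{1..N}. 0 \<le> \<rho> k \<and> \<rho> k \<le> 1}.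
        {(R, Q). 0 \<le> Q \<and>
           Q \<le> (1 / real N) * ((\<Sum>k=1..N. \<rho> k * \<zeta> * h * P) - (\<Sum>k=j+1..N. PS)) \<and>
           R \<le> (1 / real N) * (\<Sum>k=j+1..N. rate_f h P sA scov (\<rho> k))})"

definition C_OPS :: "nat \<Rightarrow> real \<Rightarrow> real \<Rightarrow> real \<Rightarrow> real \<Rightarrow> real \<Rightarrow> real \<Rightarrow> (real \<times> real) set" where
  "C_OPS N h P \<zeta> sA scov PS =
     (\<Union>j\<in>{0..N}. \<Union>\<rho>\<in>{0..1::real}.
        (let \<alpha> = real j / real N in
        {(R, Q). 0 \<le> Q \<and>
           Q \<le> \<alpha> * \<zeta> * h * P + (1 - \<alpha>) * \<rho> * \<zeta> * h * P - (1 - \<alpha>) * PS \<and>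
           R \<le> (1 - \<alpha>) * rate_f h P sA scov \<rho>}))"

end

theory Submission imports Defs "HOL-Analysis.Analysis" begin

lemma phi_convex:
  fixes sA scov a :: real
  assumes "sA \<ge> 0" "scov > 0" "a \<ge> 0"
  shows "convex_on {0..1} (\<lambda>r. ln ((1-r) * sA+scov) - ln ((1-r) * (sA+a)+scov))"
proof (rule f''_ge0_imp_convex[where f' = "\<lambda>r. -sA/((1-r) * sA+scov) + (sA+a)/((1-r) * (sA+a)+scov)"
   and f'' = "\<lambda>r. (sA+a)^2/((1-r) * (sA+a)+scov)^2 - sA^2/((1-r) * sA+scov)^2"])
  show "convex {0..1::real}" by simp
next
  fix x :: real assume x: "x \<in> {0..1}"
  have B: "(1-x) * sA+scov > 0" using x assms by (simp add: add_nonneg_pos)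
  have A: "(1-x) * (sA+a)+scov > 0" using x assms by (simp add: add_nonneg_pos)
  have d1: "DERIV (\<lambda>r. (1-r) * sA+scov) x :> - sA"
    by (auto intro!: derivative_eq_intros)
  have d2: "DERIV (\<lambda>r. (1-r) * (sA+a)+scov) x :> - (sA+a)"
    by (auto intro!: derivative_eq_intros)
  show "DERIV (\<lambda>r. ln ((1-r) * sA+scov) - ln ((1-r) * (sA+a)+scov)) x :>
      (-sA/((1-x) * sA+scov) + (sA+a)/((1-x) * (sA+a)+scov))"
    by (rule DERIV_cong[OF DERIV_diff[OF DERIV_chain2[OF DERIV_ln[OF B] d1] DERIV_chain2[OF DERIV_ln[OF A] d2]]]) (simp add: divide_inverse algebra_simps)
  show "DERIV (\<lambda>r. -sA/((1-r) * sA+scov) + (sA+a)/((1-r) * (sA+a)+scov)) x :>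
      ((sA+a)^2/((1-x) * (sA+a)+scov)^2 - sA^2/((1-x) * sA+scov)^2)"
  proof -
    have e1: "DERIV (\<lambda>r. -sA/((1-r) * sA+scov)) x :> (-sA) * (- (-sA) / ((1-x) * sA+scov)^2)"
      by (rule DERIV_cong[OF DERIV_cmult[OF DERIV_inverse_fun[OF d1], of "-sA"], unfolded divide_inverse[symmetric]])
        (use B in \<open>auto simp: power2_eq_square divide_inverse\<close>)
    have e2: "DERIV (\<lambda>r. (sA+a)/((1-r) * (sA+a)+scov)) x :> (sA+a) * (- (-(sA+a)) / ((1-x) * (sA+a)+scov)^2)"
      by (rule DERIV_cong[OF DERIV_cmult[OF DERIV_inverse_fun[OF d2], of "sA+a"], unfolded divide_inverse[symmetric]])
        (use A in \<open>auto simp: power2_eq_square divide_inverse algebra_simps\<close>)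
    show ?thesis by (rule DERIV_cong[OF DERIV_add[OF e1 e2]]) (simp add: power2_eq_square)
  qed
  have "sA/((1-x) * sA+scov) \<le> (sA+a)/((1-x) * (sA+a)+scov)"
  proof -
    have "sA*((1-x) * (sA+a)+scov) - (sA+a)*((1-x) * sA+scov) = - (a * scov)"
      by (simp add: algebra_simps)
    moreover have "a * scov \<ge> 0" using assms by simp
    ultimately have prod: "sA*((1-x) * (sA+a)+scov) \<le> (sA+a)*((1-x) * sA+scov)" by linarith
    show ?thesis using prod A B by (simp add: divide_simps mult.commute)
  qed
  moreover have "0 \<le> sA/((1-x) * sA+scov)" using B assms by simp
  ultimately have "(sA/((1-x) * sA+scov))^2 \<le> ((sA+a)/((1-x) * (sA+a)+scov))^2"
    by (rule power_mono)
  then show "0 \<le> (sA+a)^2/((1-x) * (sA+a)+scov)^2 - sA^2/((1-x) * sA+scov)^2"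
    by (simp add: power_divide)
qed

lemma rate_eq:
  assumes "sA \<ge> 0" "scov > 0" "h * P \<ge> 0" "0 \<le> r" "r \<le> 1"
  shows "rate_f h P sA scov r = - (ln ((1-r) * sA+scov) - ln ((1-r) * (sA+h * P)+scov)) / ln 2"
proof -
  have B: "(1-r) * sA+scov > 0" using assms by (simp add: add_nonneg_pos)
  have A: "(1-r) * (sA+h * P)+scov > 0" using assms by (simp add: add_nonneg_pos)
  have "1 + (1 - r) * h * P / ((1 - r) * sA + scov) = ((1-r) * (sA+h * P)+scov) / ((1-r) * sA+scov)"
    using B by (simp add: field_simps)
  then have "rate_f h P sA scov r = ln (((1-r) * (sA+h * P)+scov) / ((1-r) * sA+scov)) / ln 2"
    by (simp add: rate_f_def log_def)
  also have "\<dots> = - (ln ((1-r) * sA+scov) - ln ((1-r) * (sA+h * P)+scov)) / ln 2"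
    using A B by (simp add: ln_div)
  finally show ?thesis .
qed

lemma rate_jensen:
  fixes \<rho> :: "nat \<Rightarrow> real" and S :: "nat set"
  assumes "sA \<ge> 0" "scov > 0" "h * P \<ge> 0" "finite S" "S \<noteq> {}"
    and r: "\<And>k. k \<in> S \<Longrightarrow> 0 \<le> \<rho> k \<and> \<rho> k \<le> 1"
  shows "(\<Sum>k\<in>S. rate_f h P sA scov (\<rho> k)) \<le> real (card S) * rate_f h P sA scov ((\<Sum>k\<in>S. \<rho> k) / real (card S))"
proof -
  define n where "n = real (card S)"
  have n: "n > 0" using assms by (simp add: n_def card_gt_0_iff)
  define phi where "phi = (\<lambda>r. ln ((1-r) * sA+scov) - ln ((1-r) * (sA+h * P)+scov))"
  have cv: "convex_on {0..1} phi" unfolding phi_def by (rule phi_convex) (use assms in auto)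
  have avg: "(\<Sum>k\<in>S. \<rho> k) / n \<in> {0..1}"
  proof -
    have "(\<Sum>k\<in>S. \<rho> k) \<le> (\<Sum>k\<in>S. 1)" by (rule sum_mono) (use r in auto)
    moreover have "0 \<le> (\<Sum>k\<in>S. \<rho> k)" by (rule sum_nonneg) (use r in auto)
    ultimately show ?thesis using n by (simp add: n_def divide_simps)
  qed
  have "phi (\<Sum>i\<in>S. (1/n) *\<^sub>R \<rho> i) \<le> (\<Sum>i\<in>S. (1/n) * phi (\<rho> i))"
    by (rule convex_on_sum[OF assms(4,5) cv]) (use n r in \<open>auto simp: n_def\<close>)
  then have J: "phi ((\<Sum>k\<in>S. \<rho> k) / n) \<le> (\<Sum>i\<in>S. phi (\<rho> i)) / n"
    by (simp add: sum_divide_distrib[symmetric] sum_distrib_left[symmetric] divide_inverse mult.commute)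
  have ln2: "ln (2::real) > 0" by simp
  have "(\<Sum>k\<in>S. rate_f h P sA scov (\<rho> k)) = - (\<Sum>k\<in>S. phi (\<rho> k)) / ln 2"
    using r assms by (simp add: rate_eq phi_def sum_negf[symmetric] sum_divide_distrib[symmetric])
  also have "\<dots> \<le> - (n * phi ((\<Sum>k\<in>S. \<rho> k) / n)) / ln 2"
    using J n ln2 by (simp add: divide_simps mult.commute)
  also have "\<dots> = n * rate_f h P sA scov ((\<Sum>k\<in>S. \<rho> k) / n)"
  proof -
    have "rate_f h P sA scov ((\<Sum>k\<in>S. \<rho> k) / n) = - phi ((\<Sum>k\<in>S. \<rho> k) / n) / ln 2"
      unfolding phi_def by (rule rate_eq) (use avg assms in auto)
    then show ?thesis by simp
  qed
  finally show ?thesis by (simp add: n_def)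
qed

lemma sum_split_nat:
  fixes f :: "nat \<Rightarrow> real"
  assumes "j \<le> N"
  shows "(\<Sum>k=1..N. f k) = (\<Sum>k=1..j. f k) + (\<Sum>k=j+1..N. f k)"
proof -
  have "{1..N} = {1..j} \<union> {j+1..N}" using assms by auto
  moreover have "{1..j} \<inter> {j+1..N} = {}" by auto
  ultimately show ?thesis by (simp add: sum.union_disjoint)
qed

theorem proposition2:
  fixes h P \<zeta> sA scov PS :: real and N :: nat
  assumes "h > 0" and "P \<ge> 0" and "0 < \<zeta>" and "\<zeta> \<le> 1"
    and "sA \<ge> 0" and "scov > 0" and "PS > 0" and "N \<ge> 1"
  shows "C_DPS N h P \<zeta> sA scov PS = C_OPS N h P \<zeta> sA scov PS"
proof
  have hP: "h * P \<ge> 0" using assms by simp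
  define c where "c = \<zeta> * h * P"
  have c0: "c \<ge> 0" using assms by (simp add: c_def)
  have Npos: "real N > 0" using assms by simp
  have sumc: "\<And>(\<rho>::nat\<Rightarrow>real) S. (\<Sum>k\<in>S. \<rho> k * \<zeta> * h * P) = (\<Sum>k\<in>S. \<rho> k) * c"
    by (simp add: c_def sum_distrib_right mult.assoc)
  show "C_DPS N h P \<zeta> sA scov PS \<subseteq> C_OPS N h P \<zeta> sA scov PS"
  proof
    fix x assume "x \<in> C_DPS N h P \<zeta> sA scov PS"
    then obtain R Q j \<rho> where x: "x = (R, Q)" and j: "j \<in> {0..N}"
      and r: "\<forall>k\<in>{1..N}. 0 \<le> \<rho> k \<and> \<rho> k \<le> 1"
      and Q0: "0 \<le> Q"
      and Q1: "Q \<le> (1 / real N) * ((\<Sum>k=1..N. \<rho> k * \<zeta> * h * P) - (\<Sum>k=j+1..N. PS))"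
      and R1: "R \<le> (1 / real N) * (\<Sum>k=j+1..N. rate_f h P sA scov (\<rho> k))"
      unfolding C_DPS_def by blast
    have jN: "j \<le> N" using j by simp
    have Q1': "Q \<le> (1 / real N) * ((\<Sum>k=1..j. \<rho> k) * c + (\<Sum>k=j+1..N. \<rho> k) * c - real (N - j) * PS)"
      using Q1 unfolding sumc sum_split_nat[OF jN, of \<rho>] by (simp add: algebra_simps)
    have sj: "(\<Sum>k=1..j. \<rho> k) \<le> real j"
    proof -
      have "(\<Sum>k=1..j. \<rho> k) \<le> (\<Sum>k=1..j. 1)" by (rule sum_mono) (use r jN in auto)
      then show ?thesis by simp
    qed
    show "x \<in> C_OPS N h P \<zeta> sA scov PS"
    proof (cases "j = N")
      case True
      have "(\<Sum>k=1..N. \<rho> k) \<le> real N" using sj True by simp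
      then have "(\<Sum>k=1..N. \<rho> k) * c \<le> real N * c" using c0 by (rule mult_right_mono)
      then have "(1 / real N) * ((\<Sum>k=1..N. \<rho> k) * c) \<le> (1 / real N) * (real N * c)"
        by (rule mult_left_mono) (use Npos in simp)
      moreover have "Q \<le> (1 / real N) * ((\<Sum>k=1..N. \<rho> k) * c)" using Q1 True unfolding sumc by simp
      ultimately have "Q \<le> c" using Npos by simp
      moreover have "R \<le> 0" using R1 True by simp
      ultimately show ?thesis unfolding C_OPS_def x
        apply (intro UN_I[of N] UN_I[of 0])
          using Q0 Npos by (auto simp: Let_def c_def)
    next
      case False
      then have jl: "j < N" using jN by simp
      define S where "S = {j+1..N}"
      have cS: "card S = N - j" by (simp add: S_def)
      have S0: "S \<noteq> {}" using jl by (simp add: S_def)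
      define m where "m = (\<Sum>k\<in>S. \<rho> k) / real (card S)"
      have nS: "real (card S) > 0" using cS jl by simp
      have rS: "\<And>k. k \<in> S \<Longrightarrow> 0 \<le> \<rho> k \<and> \<rho> k \<le> 1" using r by (auto simp: S_def)
      have m01: "0 \<le> m \<and> m \<le> 1"
      proof -
        have "(\<Sum>k\<in>S. \<rho> k) \<le> (\<Sum>k\<in>S. 1)" by (rule sum_mono) (use rS in auto)
        moreover have "0 \<le> (\<Sum>k\<in>S. \<rho> k)" by (rule sum_nonneg) (use rS in auto)
        ultimately show ?thesis using nS by (simp add: m_def divide_simps)
      qed
      have sumS: "(\<Sum>k\<in>S. \<rho> k) = real (N - j) * m" using nS cS by (simp add: m_def)
      have Jen: "(\<Sum>k\<in>S. rate_f h P sA scov (\<rho> k)) \<le> real (N - j) * rate_f h P sA scov m"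
        using rate_jensen[OF assms(5,6) hP _ S0 rS] cS by (simp add: S_def m_def)
      define \<alpha> where "\<alpha> = real j / real N"
      have oma: "1 - \<alpha> = real (N - j) / real N" using Npos jN by (simp add: \<alpha>_def of_nat_diff field_simps)
      have "(\<Sum>k=1..j. \<rho> k) * c \<le> real j * c" using sj c0 by (rule mult_right_mono)
      then have "Q \<le> (1 / real N) * (real j * c + real (N - j) * m * c - real (N - j) * PS)"
        using Q1' Npos sumS unfolding S_def by (simp add: divide_simps)
      also have "\<dots> = \<alpha> * \<zeta> * h * P + (1 - \<alpha>) * m * \<zeta> * h * P - (1 - \<alpha>) * PS"
        unfolding oma using Npos by (simp add: \<alpha>_def c_def field_simps)
      finally have Qb: "Q \<le> \<alpha> * \<zeta> * h * P + (1 - \<alpha>) * m * \<zeta> * h * P - (1 - \<alpha>) * PS" .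
      have "R \<le> (1 / real N) * (real (N - j) * rate_f h P sA scov m)"
        using R1 Jen Npos unfolding S_def by (simp add: divide_simps)
      also have "\<dots> = (1 - \<alpha>) * rate_f h P sA scov m" unfolding oma by simp
      finally have Rb: "R \<le> (1 - \<alpha>) * rate_f h P sA scov m" .
      show ?thesis unfolding C_OPS_def x
        apply (intro UN_I[of j] UN_I[of m])
          using Q0 Qb Rb m01 jN by (auto simp: Let_def \<alpha>_def)
    qed
  qed
  show "C_OPS N h P \<zeta> sA scov PS \<subseteq> C_DPS N h P \<zeta> sA scov PS"
  proof
    fix x assume "x \<in> C_OPS N h P \<zeta> sA scov PS"
    then obtain R Q j r where x: "x = (R, Q)" and j: "j \<in> {0..N}" and r: "0 \<le> r" "r \<le> 1"
      and Q0: "0 \<le> Q"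
      and Qb: "Q \<le> real j / real N * \<zeta> * h * P + (1 - real j / real N) * r * \<zeta> * h * P - (1 - real j / real N) * PS"
      and Rb: "R \<le> (1 - real j / real N) * rate_f h P sA scov r"
      unfolding C_OPS_def Let_def by fastforce
    have jN: "j \<le> N" using j by simp
    define \<rho> where "\<rho> = (\<lambda>k::nat. if k \<le> j then 1 else r)"
    have rr: "\<forall>k\<in>{1..N}. 0 \<le> \<rho> k \<and> \<rho> k \<le> 1" using r by (simp add: \<rho>_def)
    have s1: "(\<Sum>k=1..j. \<rho> k) = real j" by (simp add: \<rho>_def)
    have s2: "(\<Sum>k=j+1..N. \<rho> k) = real (N - j) * r" by (simp add: \<rho>_def)
    have s3: "(\<Sum>k=j+1..N. rate_f h P sA scov (\<rho> k)) = real (N - j) * rate_f h P sA scov r"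
      by (simp add: \<rho>_def)
    have oma: "1 - real j / real N = real (N - j) / real N" using Npos jN by (simp add: of_nat_diff field_simps)
    have Q1: "Q \<le> (1 / real N) * ((\<Sum>k=1..N. \<rho> k * \<zeta> * h * P) - (\<Sum>k=j+1..N. PS))"
    proof -
      have "(1 / real N) * ((\<Sum>k=1..N. \<rho> k * \<zeta> * h * P) - (\<Sum>k=j+1..N. PS))
          = (1 / real N) * (real j * c + real (N - j) * r * c - real (N - j) * PS)"
        unfolding sumc sum_split_nat[OF jN, of \<rho>] s1 s2 by (simp add: algebra_simps)
      also have "\<dots> = real j / real N * \<zeta> * h * P + (1 - real j / real N) * r * \<zeta> * h * P - (1 - real j / real N) * PS"
        unfolding oma using Npos by (simp add: c_def field_simps)
      finally show ?thesis using Qb by simp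
    qed
    have R1: "R \<le> (1 / real N) * (\<Sum>k=j+1..N. rate_f h P sA scov (\<rho> k))"
      using Rb unfolding s3 oma by simp
    show "x \<in> C_DPS N h P \<zeta> sA scov PS"
      unfolding C_DPS_def x using j rr Q0 Q1 R1 by blast
  qed
qed

end
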